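(* Let $U\in\mathcal C_n$ be a Clifford unitary with tableau $\begin{bmatrix}A&B\\C&D\end{bmatrix}$. Let $z\in\mathrm{supp}(U|0\rangle^{\otimes n})$ and let $r\in\{0,1\}^n$ be uniformly random. Then $rC\oplus z\in\mathrm{supp}(U|0\rangle^{\otimes n})$, and $rC\oplus z$ is a uniformly random element of $\mathrm{supp}(U|0\rangle^{\otimes n})$.
   Context: $\mathcal C_n$ is the $n$-qubit Clifford group (unitaries $U$ with $U\mathcal P_nU^\dagger=\mathcal P_n$, $\mathcal P_n$ the Pauli group). For $a\in\mathbb F_2^n$, $X^a=X^{a_1}\otimes\cdots\otimes X^{a_n}$ and similarly $Z^a$; $e_i$ is the $i$-th standard basis vector. The tableau of $U$ (ignoring signs) is the $2n\times 2n$ binary matrix $\begin{bmatrix}A&B\\C&D\end{bmatrix}$ with $A,B,C,D\in\mathbb F_2^{n\times n}$, where the $i$-th row of $A$ (resp. $B$) is the $X$-part (resp. $Z$-part) of the Pauli string $UX^{e_i}U^\dagger=\pm X^{a}Z^{b}$ (up to phase), and the $i$-th row of $C$ (resp. $D$) is the $X$-part (resp. $Z$-part) of $UZ^{e_i}U^\dagger$. For $|\psi\rangle=\sum_x\alpha_x|x\rangle$, $\mathrm{supp}(|\psi\rangle)=\{x:\alpha_x\ne0\}$. Here $rC$ is the row vector product over $\mathbb F_2$. *)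

theory Defs
  imports "Jordan_Normal_Form.Matrix" "HOL-Probability.Probability_Mass_Function"
begin

text \<open>Bit strings of length n are bool lists; the computational basis state |x> of n qubits
 corresponds to matrix index bits_to_nat x (first qubit = most significant bit).\<close>

definition bits :: "nat \<Rightarrow> bool list set" where
  "bits n = {xs. length xs = n}"

fun bits_to_nat :: "bool list \<Rightarrow> nat" where
  "bits_to_nat [] = 0"
| "bits_to_nat (b # bs) = (if b then 2 ^ length bs else 0) + bits_to_nat bs"

definition nat_to_bits :: "nat \<Rightarrow> nat \<Rightarrow> bool list" where
  "nat_to_bits n k = map (\<lambda>i. odd (k div 2 ^ (n - 1 - i))) [0..<n]"

definition bxor :: "bool list \<Rightarrow> bool list \<Rightarrow> bool list" where
  "bxor xs ys = map2 (\<noteq>) xs ys"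

definition bdot :: "bool list \<Rightarrow> bool list \<Rightarrow> bool" where
  "bdot xs ys = odd (length (filter id (map2 (\<and>) xs ys)))"

definition unit_bits :: "nat \<Rightarrow> nat \<Rightarrow> bool list" where
  "unit_bits n i = map (\<lambda>j. j = i) [0..<n]"

text \<open>The Pauli operator i^k X^a Z^b on n qubits:
  (X^a Z^b)|y> = (-1)^(b.y) |y xor a>.\<close>
definition pauli_mat :: "nat \<Rightarrow> nat \<Rightarrow> bool list \<Rightarrow> bool list \<Rightarrow> complex mat" where
  "pauli_mat n k a b = Matrix.mat (2^n) (2^n) (\<lambda>(i,j).
      if nat_to_bits n i = bxor (nat_to_bits n j) a
      then \<i> ^ k * (if bdot b (nat_to_bits n j) then -1 else 1) else 0)"

definition pauli_group :: "nat \<Rightarrow> complex mat set" where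
  "pauli_group n = {pauli_mat n k a b | k a b. a \<in> bits n \<and> b \<in> bits n}"

definition adj :: "complex mat \<Rightarrow> complex mat" where
  "adj U = Matrix.mat (dim_col U) (dim_row U) (\<lambda>(i,j). cnj (U $$ (j,i)))"

definition clifford :: "nat \<Rightarrow> complex mat \<Rightarrow> bool" where
  "clifford n U \<longleftrightarrow> U \<in> carrier_mat (2^n) (2^n) \<and> U * adj U = 1\<^sub>m (2^n)
     \<and> (\<lambda>P. U * P * adj U) ` pauli_group n = pauli_group n"

text \<open>C is the lower-left block of the tableau of U (ignoring signs): row i of C is the
 X-part of U Z^(e_i) U^dagger.\<close>
definition tableau_C :: "nat \<Rightarrow> complex mat \<Rightarrow> (nat \<Rightarrow> bool list) \<Rightarrow> bool" where
  "tableau_C n U C \<longleftrightarrow> (\<forall>i<n. C i \<in> bits n \<and>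
     (\<exists>k b. U * pauli_mat n 0 (replicate n False) (unit_bits n i) * adj U = pauli_mat n k (C i) b))"

definition row_mul :: "nat \<Rightarrow> bool list \<Rightarrow> (nat \<Rightarrow> bool list) \<Rightarrow> bool list" where
  "row_mul n r C = foldr bxor [C i. i \<leftarrow> [0..<n], r ! i] (replicate n False)"

definition supp0 :: "nat \<Rightarrow> complex mat \<Rightarrow> bool list set" where
  "supp0 n U = {x \<in> bits n. U $$ (bits_to_nat x, 0) \<noteq> 0}"

end

theory Submission
  imports Defs "Jordan_Normal_Form.Determinant"
begin

lemma length_nat_to_bits[simp]: "length (nat_to_bits n k) = n"
  by (simp add: nat_to_bits_def)

lemma nat_to_bits_in_bits[simp]: "nat_to_bits n k \<in> bits n"
  by (simp add: bits_def)

lemma odd_mod_div: "j < n \<Longrightarrow> odd (((k::nat) mod 2^n) div 2^j) = odd (k div 2^j)"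
  by (metis bit_iff_odd bit_take_bit_iff take_bit_eq_mod)

lemma nth_nat_to_bits: "i < n \<Longrightarrow> nat_to_bits n k ! i = odd (k div 2^(n-1-i))"
  by (simp add: nat_to_bits_def del: upt_Suc)

lemma nat_to_bits_Suc: "nat_to_bits (Suc n) k = odd (k div 2^n) # nat_to_bits n (k mod 2^n)"
proof (rule nth_equalityI)
  fix i assume "i < length (nat_to_bits (Suc n) k)"
  then show "nat_to_bits (Suc n) k ! i = (odd (k div 2^n) # nat_to_bits n (k mod 2^n)) ! i"
    by (cases i) (auto simp: nth_nat_to_bits odd_mod_div)
qed simp

lemma mod_Suc_split: "(k::nat) mod (2 * 2^n) = (if odd (k div 2^n) then 2^n else 0) + k mod 2^n"
proof -
  have "k mod (2^n*2) = 2^n*(k div 2^n mod 2) + k mod 2^n" by (rule mod_mult2_eq)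
  then have e: "k mod (2*2^n) = 2^n*(k div 2^n mod 2) + k mod 2^n" by (simp add: mult.commute)
  show ?thesis
  proof (cases "odd (k div 2^n)")
    case True
    then have "k div 2^n mod 2 = 1" by (simp add: odd_iff_mod_2_eq_one)
    then show ?thesis using e True by simp
  next
    case False
    then have "k div 2^n mod 2 = 0" by (simp add: even_iff_mod_2_eq_zero)
    then show ?thesis using e False by simp
  qed
qed

lemma bits_to_nat_nat_to_bits: "bits_to_nat (nat_to_bits n k) = k mod 2^n"
proof (induction n arbitrary: k)
  case 0 then show ?case by (simp add: nat_to_bits_def)
next
  case (Suc n) then show ?case by (simp add: nat_to_bits_Suc mod_Suc_split)
qed

lemma bits_to_nat_lt: "bits_to_nat x < 2^length x"
  by (induction x) auto

lemma nat_to_bits_bits_to_nat: "nat_to_bits (length x) (bits_to_nat x) = x"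
proof (induction x)
  case Nil then show ?case by (simp add: nat_to_bits_def)
next
  case (Cons b x)
  have lt: "bits_to_nat x < 2^length x" by (rule bits_to_nat_lt)
  then show ?case using Cons by (simp add: nat_to_bits_Suc)
qed

lemma nat_to_bits_inj: "i < 2^n \<Longrightarrow> j < 2^n \<Longrightarrow> nat_to_bits n i = nat_to_bits n j \<Longrightarrow> i = j"
proof -
  assume a: "i < 2^n" "j < 2^n" "nat_to_bits n i = nat_to_bits n j"
  then have "bits_to_nat (nat_to_bits n i) = bits_to_nat (nat_to_bits n j)" by simp
  then have "i mod 2^n = j mod 2^n" by (simp only: bits_to_nat_nat_to_bits)
  then show "i = j" using a by simp
qed

lemma nat_to_bits_eq_iff: "i < 2^n \<Longrightarrow> x \<in> bits n \<Longrightarrow> nat_to_bits n i = x \<longleftrightarrow> i = bits_to_nat x"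
proof
  assume a: "i < 2^n" "x \<in> bits n" "nat_to_bits n i = x"
  then have "bits_to_nat (nat_to_bits n i) = bits_to_nat x" by simp
  then have "i mod 2^n = bits_to_nat x" by (simp only: bits_to_nat_nat_to_bits)
  then show "i = bits_to_nat x" using a by simp
next
  assume a: "x \<in> bits n" "i = bits_to_nat x"
  then show "nat_to_bits n i = x" using nat_to_bits_bits_to_nat[of x] by (simp add: bits_def)
qed


section \<open>xor algebra\<close>

lemma length_bxor[simp]: "length (bxor a b) = min (length a) (length b)"
  by (simp add: bxor_def)

lemma nth_bxor[simp]: "i < length a \<Longrightarrow> i < length b \<Longrightarrow> bxor a b ! i = (a ! i \<noteq> b ! i)"
  by (simp add: bxor_def)

lemma bxor_comm: "length a = length b \<Longrightarrow> bxor a b = bxor b a"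
  by (rule nth_equalityI) auto

lemma bxor_assoc: "length a = length b \<Longrightarrow> length b = length c \<Longrightarrow>
    bxor (bxor a b) c = bxor a (bxor b c)"
  by (rule nth_equalityI) auto

lemma bxor_zeros[simp]: "bxor a (replicate (length a) False) = a"
  by (rule nth_equalityI) auto

lemma bxor_zeros'[simp]: "length a = n \<Longrightarrow> bxor a (replicate n False) = a"
  by (rule nth_equalityI) auto

lemma zeros_bxor[simp]: "length a = n \<Longrightarrow> bxor (replicate n False) a = a"
  by (rule nth_equalityI) auto

lemma bxor_self[simp]: "bxor a a = replicate (length a) False"
  by (rule nth_equalityI) auto

lemma bxor_cancel: "length a = length b \<Longrightarrow> bxor (bxor a b) b = a"
  by (rule nth_equalityI) auto

lemma bxor_eq_iff: "length a = n \<Longrightarrow> length b = n \<Longrightarrow> length c = n \<Longrightarrow>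
   (a = bxor b c) = (b = bxor a c)"
  by (metis bxor_cancel length_bxor min.idem)

lemma bdot_Cons[simp]: "bdot (p # a) (q # x) = ((p \<and> q) \<noteq> bdot a x)"
  by (cases p; cases q) (simp_all add: bdot_def)

lemma bdot_Nil[simp]: "bdot [] x = False" "bdot a [] = False"
  by (simp_all add: bdot_def)

lemma bdot_zeros[simp]: "bdot (replicate n False) x = False"
proof (induction n arbitrary: x)
  case (Suc n) then show ?case by (cases x) auto
qed simp

lemma bdot_bxor: "length a = length x \<Longrightarrow> length b = length x \<Longrightarrow>
   bdot (bxor a b) x = (bdot a x \<noteq> bdot b x)"
proof (induction x arbitrary: a b)
  case Nil then show ?case by simp
next
  case (Cons q x)
  then obtain p a' p' b' where "a = p # a'" "b = p' # b'"
    by (metis length_Suc_conv)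
  with Cons show ?case by (auto simp: bxor_def)
qed


definition dz :: "nat \<Rightarrow> bool list \<Rightarrow> nat \<Rightarrow> complex" where
  "dz n r j = (if bdot r (nat_to_bits n j) then -1 else 1)"

definition Zd :: "nat \<Rightarrow> bool list \<Rightarrow> complex mat" where
  "Zd n r = Matrix.mat (2^n) (2^n) (\<lambda>(i,j). if i = j then dz n r j else 0)"

lemma Zd_carrier[simp]: "Zd n r \<in> carrier_mat (2^n) (2^n)"
  by (simp add: Zd_def)

lemma Zd_dim[simp]: "dim_row (Zd n r) = 2^n" "dim_col (Zd n r) = 2^n"
  by (simp_all add: Zd_def)

lemma Zd_index: "i < 2^n \<Longrightarrow> j < 2^n \<Longrightarrow> Zd n r $$ (i,j) = (if i = j then dz n r j else 0)"
  by (simp add: Zd_def)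

lemma sum_delta_l: "finite S \<Longrightarrow> i \<in> S \<Longrightarrow> (\<Sum>l\<in>S. (if i = l then d l else 0) * (x l :: complex)) = d i * x i"
proof -
  assume "finite S" "i \<in> S"
  have "(\<Sum>l\<in>S. (if i = l then d l else 0) * x l) = (\<Sum>l\<in>S. if i = l then d l * x l else 0)"
    by (rule sum.cong) auto
  also have "\<dots> = d i * x i" using \<open>finite S\<close> \<open>i \<in> S\<close> by (simp add: sum.delta sum.delta')
  finally show ?thesis .
qed

lemma sum_delta_r: "finite S \<Longrightarrow> j \<in> S \<Longrightarrow> (\<Sum>l\<in>S. (x l :: complex) * (if l = j then d l else 0)) = x j * d j"
proof -
  assume "finite S" "j \<in> S"
  have "(\<Sum>l\<in>S. x l * (if l = j then d l else 0)) = (\<Sum>l\<in>S. if l = j then x l * d l else 0)"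
    by (rule sum.cong) auto
  also have "\<dots> = x j * d j" using \<open>finite S\<close> \<open>j \<in> S\<close> by (simp add: sum.delta sum.delta')
  finally show ?thesis .
qed

lemma Zd_mult_left: "M \<in> carrier_mat (2^n) m \<Longrightarrow> i < 2^n \<Longrightarrow> j < m \<Longrightarrow>
   (Zd n r * M) $$ (i,j) = dz n r i * M $$ (i,j)"
  by (simp add: scalar_prod_def Zd_index sum_delta_l)

lemma Zd_mult_right: "M \<in> carrier_mat m (2^n) \<Longrightarrow> i < m \<Longrightarrow> j < 2^n \<Longrightarrow>
   (M * Zd n r) $$ (i,j) = M $$ (i,j) * dz n r j"
  using sum_delta_r[of "{0..<2^n}" j "\<lambda>l. M $$ (i,l)" "\<lambda>_. dz n r j"]
  by (simp add: scalar_prod_def Zd_index)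

lemma Zd_mult: assumes "r \<in> bits n" "s \<in> bits n" shows "Zd n r * Zd n s = Zd n (bxor r s)"
proof (rule eq_matI)
  fix i j assume "i < dim_row (Zd n (bxor r s))" "j < dim_col (Zd n (bxor r s))"
  then have ij: "i < 2^n" "j < 2^n" by simp_all
  have l: "length r = n" "length s = n" using assms by (simp_all add: bits_def)
  show "(Zd n r * Zd n s) $$ (i, j) = Zd n (bxor r s) $$ (i, j)"
    using ij l by (subst Zd_mult_left[OF Zd_carrier]) (simp_all add: Zd_index dz_def bdot_bxor)
qed simp_all

lemma Zd_zeros: "Zd n (replicate n False) = 1\<^sub>m (2^n)"
  by (rule eq_matI) (auto simp: Zd_index dz_def)

lemma pauli_Z: "r \<in> bits n \<Longrightarrow> pauli_mat n 0 (replicate n False) r = Zd n r"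
  by (rule eq_matI) (auto simp: Zd_index dz_def pauli_mat_def dest: nat_to_bits_inj)

definition shifted :: "nat \<Rightarrow> bool list \<Rightarrow> complex mat \<Rightarrow> bool" where
  "shifted n a M \<longleftrightarrow> (\<forall>i<2^n. \<forall>j<2^n. M $$ (i,j) \<noteq> 0 \<longrightarrow> nat_to_bits n i = bxor (nat_to_bits n j) a)"

lemma pauli_shifted: "shifted n a (pauli_mat n k a b)"
  by (auto simp: shifted_def pauli_mat_def split: if_splits)

lemma one_shifted: "shifted n (replicate n False) (1\<^sub>m (2^n))"
  by (auto simp: shifted_def split: if_splits)

lemma shifted_mult:
  assumes A: "A \<in> carrier_mat (2^n) (2^n)" and B: "B \<in> carrier_mat (2^n) (2^n)"
    and sa: "shifted n a A" and sb: "shifted n b B" and la: "a \<in> bits n" and lb: "b \<in> bits n"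
  shows "shifted n (bxor a b) (A * B)"
  unfolding shifted_def
proof (intro allI impI)
  fix i j assume i: "i < 2^n" and j: "j < 2^n" and nz: "(A * B) $$ (i,j) \<noteq> 0"
  have "(A * B) $$ (i,j) = (\<Sum>l\<in>{0..<2^n}. A $$ (i,l) * B $$ (l,j))"
    using A B i j by (simp add: scalar_prod_def)
  with nz obtain l where l: "l < 2^n" and "A $$ (i,l) * B $$ (l,j) \<noteq> 0"
    by (metis (no_types, lifting) atLeastLessThan_iff sum.neutral)
  then have "A $$ (i,l) \<noteq> 0" "B $$ (l,j) \<noteq> 0" by auto
  with sa sb i j l have "nat_to_bits n i = bxor (nat_to_bits n l) a"
     "nat_to_bits n l = bxor (nat_to_bits n j) b" by (auto simp: shifted_def)
  then show "nat_to_bits n i = bxor (nat_to_bits n j) (bxor a b)"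
    using la lb by (simp add: bits_def bxor_assoc bxor_comm[of a b])
qed


section \<open>conjugation\<close>

lemma foldr_bxor_len: "(\<forall>x\<in>set xs. length x = n) \<Longrightarrow> length c = n \<Longrightarrow> length (foldr bxor xs c) = n"
  by (induction xs) auto

lemma foldr_bxor_gen: "(\<forall>x\<in>set xs. length x = n) \<Longrightarrow> length c = n \<Longrightarrow>
   foldr bxor xs c = bxor (foldr bxor xs (replicate n False)) c"
proof (induction xs)
  case Nil then show ?case by simp
next
  case (Cons x xs)
  then have l: "length (foldr bxor xs (replicate n False)) = n" by (simp add: foldr_bxor_len)
  from Cons have "foldr bxor (x # xs) c = bxor x (bxor (foldr bxor xs (replicate n False)) c)" by simp
  also have "\<dots> = bxor (bxor x (foldr bxor xs (replicate n False))) c"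
    using l Cons.prems by (simp add: bxor_assoc)
  finally show ?case by simp
qed

definition rowm :: "nat \<Rightarrow> (nat \<Rightarrow> bool list) \<Rightarrow> nat \<Rightarrow> bool list \<Rightarrow> bool list" where
  "rowm n C m r = foldr bxor [C i. i \<leftarrow> [0..<m], r ! i] (replicate n False)"

lemma rowm_0[simp]: "rowm n C 0 r = replicate n False"
  by (simp add: rowm_def)

lemma rowm_len: "\<forall>i. length (C i) = n \<Longrightarrow> length (rowm n C m r) = n"
  unfolding rowm_def by (rule foldr_bxor_len) auto

lemma rowm_Suc: assumes "\<forall>i. length (C i) = n"
  shows "rowm n C (Suc m) r = (if r ! m then bxor (rowm n C m r) (C m) else rowm n C m r)"
proof -
  have "rowm n C (Suc m) r = foldr bxor [C i. i \<leftarrow> [0..<m], r ! i] (foldr bxor (if r ! m then [C m] else []) (replicate n False))"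
    by (simp add: rowm_def)
  also have "\<dots> = (if r ! m then bxor (rowm n C m r) (C m) else rowm n C m r)"
  proof (cases "r ! m")
    case True
    then show ?thesis using assms
      by (simp add: rowm_def) (rule foldr_bxor_gen, auto)
  qed (simp add: rowm_def)
  finally show ?thesis .
qed

definition zm :: "nat \<Rightarrow> nat \<Rightarrow> bool list \<Rightarrow> bool list" where
  "zm n m r = map (\<lambda>j. j < m \<and> r ! j) [0..<n]"

lemma zm_len[simp]: "length (zm n m r) = n" by (simp add: zm_def)

lemma zm_0: "zm n 0 r = replicate n False"
  by (rule nth_equalityI) (auto simp: zm_def)

lemma zm_n: "length r = n \<Longrightarrow> zm n n r = r"
  by (rule nth_equalityI) (auto simp: zm_def)

lemma zm_Suc: "m < n \<Longrightarrow> zm n (Suc m) r = (if r ! m then bxor (zm n m r) (unit_bits n m) else zm n m r)"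
  by (rule nth_equalityI) (auto simp: zm_def unit_bits_def less_Suc_eq)

lemma conj_mult:
  fixes A B U V :: "complex mat"
  assumes "A \<in> carrier_mat N N" "B \<in> carrier_mat N N" "U \<in> carrier_mat N N" "V \<in> carrier_mat N N"
    and VU: "V * U = 1\<^sub>m N"
  shows "U * (A * B) * V = (U * A * V) * (U * B * V)"
proof -
  have c: "\<And>X. X \<in> carrier_mat N N \<Longrightarrow> V * (U * X) = X"
  proof -
    fix X :: "complex mat" assume "X \<in> carrier_mat N N"
    then have "V * (U * X) = (V * U) * X" using assms by (intro assoc_mult_mat[symmetric]) auto
    also have "\<dots> = 1\<^sub>m N * X" by (simp only: VU)
    also have "\<dots> = X" using \<open>X \<in> carrier_mat N N\<close> by (rule left_mult_one_mat)
    finally show "V * (U * X) = X" .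
  qed
  note cs = assms(1-4)
  have e1: "(U * A * V) * (U * B * V) = (U * A) * (V * (U * B * V))"
    by (rule assoc_mult_mat) (use cs in auto)
  have e2: "U * B * V = U * (B * V)" by (rule assoc_mult_mat) (use cs in auto)
  have e3: "V * (U * (B * V)) = B * V" using cs by (intro c) auto
  have e4: "(U * A) * (B * V) = U * (A * (B * V))" by (rule assoc_mult_mat) (use cs in auto)
  have e5: "U * (A * B) * V = U * ((A * B) * V)" by (rule assoc_mult_mat) (use cs in auto)
  have e6: "(A * B) * V = A * (B * V)" by (rule assoc_mult_mat) (use cs in auto)
  have "U * (A * B) * V = U * (A * (B * V))" using e5 e6 by simp
  also have "\<dots> = (U * A) * (V * (U * (B * V)))" using e4 e3 by simp
  also have "\<dots> = (U * A * V) * (U * B * V)" using e1 e2 by simp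
  finally show ?thesis .
qed

lemma conj_shifted:
  assumes U: "U \<in> carrier_mat (2^n) (2^n)" and V: "V \<in> carrier_mat (2^n) (2^n)"
    and VU: "V * U = 1\<^sub>m (2^n)" and UV: "U * V = 1\<^sub>m (2^n)"
    and lenC: "\<forall>i. length (C i) = n"
    and tab: "\<forall>i<n. \<exists>k b. U * pauli_mat n 0 (replicate n False) (unit_bits n i) * V = pauli_mat n k (C i) b"
  shows "m \<le> n \<Longrightarrow> shifted n (rowm n C m r) (U * Zd n (zm n m r) * V)"
proof (induction m)
  case 0
  have "U * Zd n (zm n 0 r) * V = 1\<^sub>m (2^n)" using U UV by (simp add: zm_0 Zd_zeros)
  then show ?case by (simp add: one_shifted)
next
  case (Suc m)
  then have m: "m < n" and IH: "shifted n (rowm n C m r) (U * Zd n (zm n m r) * V)" by auto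
  show ?case
  proof (cases "r ! m")
    case False
    then show ?thesis using IH m lenC by (simp add: zm_Suc rowm_Suc)
  next
    case True
    have ub: "unit_bits n m \<in> bits n" by (simp add: unit_bits_def bits_def)
    have zb: "zm n m r \<in> bits n" by (simp add: bits_def)
    obtain k b where kb: "U * pauli_mat n 0 (replicate n False) (unit_bits n m) * V = pauli_mat n k (C m) b"
      using tab m by blast
    have e1: "U * Zd n (zm n (Suc m) r) * V = (U * Zd n (zm n m r) * V) * (U * Zd n (unit_bits n m) * V)"
      using True m conj_mult[OF Zd_carrier Zd_carrier U V VU] by (simp add: zm_Suc Zd_mult[OF zb ub, symmetric])
    have e2: "U * Zd n (unit_bits n m) * V = pauli_mat n k (C m) b"
      using kb pauli_Z[OF ub] by simp
    have "shifted n (bxor (rowm n C m r) (C m)) (U * Zd n (zm n (Suc m) r) * V)"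
      unfolding e1 e2
      apply (rule shifted_mult[OF _ _ IH pauli_shifted])
      using U V lenC rowm_len[OF lenC] by (auto simp: bits_def pauli_mat_def)
    then show ?thesis using True lenC by (simp add: rowm_Suc)
  qed
qed


section \<open>character sum\<close>

lemma bits_eq: "bits n = {xs. set xs \<subseteq> UNIV \<and> length xs = n}"
  by (simp add: bits_def)

lemma finite_bits[simp]: "finite (bits n)"
  unfolding bits_eq by (rule finite_lists_length_eq) simp

lemma card_bits[simp]: "card (bits n) = 2^n"
  using card_lists_length_eq[of "UNIV::bool set" n] by (simp add: bits_def)

lemma bits_nonempty[simp]: "bits n \<noteq> {}"
  using card_bits[of n] by (metis card.empty power_not_zero zero_neq_numeral)

lemma bits_Suc: "bits (Suc n) = (Cons True) ` bits n \<union> (Cons False) ` bits n"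
proof
  show "bits (Suc n) \<subseteq> (Cons True) ` bits n \<union> (Cons False) ` bits n"
  proof
    fix x assume "x \<in> bits (Suc n)"
    then obtain b y where "x = b # y" "length y = n" by (auto simp: bits_def length_Suc_conv)
    then show "x \<in> (Cons True) ` bits n \<union> (Cons False) ` bits n" by (cases b) (auto simp: bits_def)
  qed
qed (auto simp: bits_def)

lemma sum_bits_Suc: "(\<Sum>r\<in>bits (Suc n). f r) = (\<Sum>r\<in>bits n. f (True # r)) + (\<Sum>r\<in>bits n. f (False # r))"
proof -
  have "(\<Sum>r\<in>bits (Suc n). f r) = (\<Sum>r\<in>(Cons True) ` bits n. f r) + (\<Sum>r\<in>(Cons False) ` bits n. f r)"
    unfolding bits_Suc by (rule sum.union_disjoint) auto
  also have "\<dots> = (\<Sum>r\<in>bits n. f (True # r)) + (\<Sum>r\<in>bits n. f (False # r))"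
    by (simp add: sum.reindex)
  finally show ?thesis .
qed

lemma char_sum: "length x = n \<Longrightarrow>
   (\<Sum>r\<in>bits n. (if bdot r x then -1 else 1 :: complex)) = (if x = replicate n False then 2^n else 0)"
proof (induction x arbitrary: n)
  case Nil
  then have "bits n = {[]}" by (auto simp: bits_def)
  then show ?case using Nil by simp
next
  case (Cons b x)
  then obtain m where m: "n = Suc m" "length x = m" by auto
  show ?case
  proof (cases b)
    case True
    have "(\<Sum>r\<in>bits n. (if bdot r (b # x) then -1 else 1 :: complex))
       = (\<Sum>r\<in>bits m. (if \<not> bdot r x then -1 else 1 :: complex)) + (\<Sum>r\<in>bits m. (if bdot r x then -1 else 1))"
      using True m by (simp add: sum_bits_Suc)
    also have "\<dots> = 0" by (auto simp: sum.distrib[symmetric] intro!: sum.neutral)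
    finally show ?thesis using True m by simp
  next
    case False
    have "(\<Sum>r\<in>bits n. (if bdot r (b # x) then -1 else 1 :: complex))
       = 2 * (\<Sum>r\<in>bits m. (if bdot r x then -1 else 1 :: complex))"
      using False m by (simp add: sum_bits_Suc)
    then show ?thesis using False m Cons.IH[OF m(2)] by simp
  qed
qed

lemma bits_to_nat_zeros[simp]: "bits_to_nat (replicate n False) = 0"
  by (induction n) auto

lemma nat_to_bits_0: "nat_to_bits n 0 = replicate n False"
  by (rule nth_equalityI) (auto simp: nth_nat_to_bits)

lemma nat_to_bits_zero_iff: "l < 2^n \<Longrightarrow> nat_to_bits n l = replicate n False \<longleftrightarrow> l = 0"
  using nat_to_bits_eq_iff[of l n "replicate n False"] by (simp add: bits_def)

lemma conj_entry:
  assumes U: "U \<in> carrier_mat (2^n) (2^n)" and V: "V \<in> carrier_mat (2^n) (2^n)"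
    and y: "y < 2^n" and z: "z < 2^n"
  shows "(U * Zd n r * V) $$ (y,z) = (\<Sum>l\<in>{0..<2^n}. U $$ (y,l) * dz n r l * V $$ (l,z))"
proof -
  have "(U * Zd n r * V) $$ (y,z) = (\<Sum>l\<in>{0..<2^n}. (U * Zd n r) $$ (y,l) * V $$ (l,z))"
    using U V y z by (simp add: scalar_prod_def)
  also have "\<dots> = (\<Sum>l\<in>{0..<2^n}. U $$ (y,l) * dz n r l * V $$ (l,z))"
  proof (rule sum.cong)
    fix l :: nat assume "l \<in> {0..<2^n}"
    then have "(U * Zd n r) $$ (y,l) = U $$ (y,l) * dz n r l" using Zd_mult_right[OF U y] by simp
    then show "(U * Zd n r) $$ (y,l) * V $$ (l,z) = U $$ (y,l) * dz n r l * V $$ (l,z)" by simp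
  qed simp
  finally show ?thesis .
qed

lemma conj_sum:
  assumes U: "U \<in> carrier_mat (2^n) (2^n)" and V: "V \<in> carrier_mat (2^n) (2^n)"
    and y: "y < 2^n" and z: "z < 2^n"
  shows "(\<Sum>r\<in>bits n. (U * Zd n r * V) $$ (y,z)) = 2^n * U $$ (y,0) * V $$ (0,z)"
proof -
  have "(\<Sum>r\<in>bits n. (U * Zd n r * V) $$ (y,z))
      = (\<Sum>r\<in>bits n. \<Sum>l\<in>{0..<2^n}. U $$ (y,l) * V $$ (l,z) * dz n r l)"
    by (rule sum.cong) (auto simp: conj_entry[OF U V y z] mult_ac)
  also have "\<dots> = (\<Sum>l\<in>{0..<2^n}. U $$ (y,l) * V $$ (l,z) * (\<Sum>r\<in>bits n. dz n r l))"
    by (subst sum.swap) (simp add: sum_distrib_left)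
  also have "\<dots> = (\<Sum>l\<in>{0..<2^n}. if l = 0 then U $$ (y,l) * V $$ (l,z) * 2^n else 0)"
    by (rule sum.cong) (auto simp: dz_def char_sum nat_to_bits_zero_iff)
  also have "\<dots> = 2^n * U $$ (y,0) * V $$ (0,z)" by simp
  finally show ?thesis .
qed


lemma rowm_lin:
  assumes lenC: "\<forall>i. length (C i) = n" and r: "length r = n" and s: "length s = n"
  shows "m \<le> n \<Longrightarrow> rowm n C m (bxor r s) = bxor (rowm n C m r) (rowm n C m s)"
proof (induction m)
  case 0 then show ?case by simp
next
  case (Suc m)
  then have m: "m < n" and IH: "rowm n C m (bxor r s) = bxor (rowm n C m r) (rowm n C m s)" by auto
  have l: "length (rowm n C m r) = n" "length (rowm n C m s) = n" "length (C m) = n"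
    using lenC by (simp_all add: rowm_len)
  have nb: "bxor r s ! m = (r ! m \<noteq> s ! m)" using m r s by simp
  show ?case
    unfolding rowm_Suc[OF lenC] nb IH
    by (cases "r ! m"; cases "s ! m") (auto intro!: nth_equalityI simp: l)
qed

lemma bxor_zero_iff: "length a = length b \<Longrightarrow> bxor a b = replicate (length a) False \<longleftrightarrow> a = b"
proof
  assume l: "length a = length b" and e: "bxor a b = replicate (length a) False"
  show "a = b"
  proof (rule nth_equalityI)
    fix i assume "i < length a"
    then have "bxor a b ! i = replicate (length a) False ! i" using e by simp
    then show "a ! i = b ! i" using l \<open>i < length a\<close> by auto
  qed (use l in simp)
qed simp

lemma bdot_zeros2[simp]: "bdot r (replicate n False) = False"
proof (induction n arbitrary: r)
  case (Suc n) then show ?case by (cases r) auto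
qed simp


theorem mainTheorem18:
  fixes n :: nat and U :: "complex mat" and C :: "nat \<Rightarrow> bool list" and z :: "bool list"
  assumes "clifford n U"
    and "tableau_C n U C"
    and "z \<in> supp0 n U"
  shows "(\<forall>r \<in> bits n. bxor (row_mul n r C) z \<in> supp0 n U)
    \<and> map_pmf (\<lambda>r. bxor (row_mul n r C) z) (pmf_of_set (bits n)) = pmf_of_set (supp0 n U)"
proof -
  have cl: "U \<in> carrier_mat (2^n) (2^n) \<and> U * adj U = 1\<^sub>m (2^n) \<and> (\<lambda>P. U * P * adj U) ` pauli_group n = pauli_group n"
    using assms(1) unfolding clifford_def .
  have U: "U \<in> carrier_mat (2^n) (2^n)" using cl by (rule conjunct1)
  have UV0: "U * adj U = 1\<^sub>m (2^n)" using cl by (rule conjunct1[OF conjunct2])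
  define V where "V = adj U"
  have V: "V \<in> carrier_mat (2^n) (2^n)"
  proof (rule carrier_matI)
    show "dim_row V = 2^n" using U unfolding V_def adj_def by simp
    show "dim_col V = 2^n" using U unfolding V_def adj_def by simp
  qed
  have UV: "U * V = 1\<^sub>m (2^n)" using UV0 by (simp add: V_def)
  have VU: "V * U = 1\<^sub>m (2^n)" using mat_mult_left_right_inverse[OF U V UV] .
  have Vidx: "\<And>i j. i < 2^n \<Longrightarrow> j < 2^n \<Longrightarrow> V $$ (i,j) = cnj (U $$ (j,i))"
    using U by (auto simp: V_def adj_def)
  define C' where "C' i = (if i < n then C i else replicate n False)" for i
  have tabC: "\<forall>i<n. C i \<in> bits n \<and> (\<exists>k b. U * pauli_mat n 0 (replicate n False) (unit_bits n i) * V = pauli_mat n k (C i) b)"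
    using assms(2) by (simp add: tableau_C_def V_def)
  have lenC': "\<forall>i. length (C' i) = n" using tabC by (auto simp: C'_def bits_def)
  have tab': "\<forall>i<n. \<exists>k b. U * pauli_mat n 0 (replicate n False) (unit_bits n i) * V = pauli_mat n k (C' i) b"
    using tabC by (simp add: C'_def)
  have lists: "\<And>m r. m \<le> n \<Longrightarrow> [C i. i \<leftarrow> [0..<m], r ! i] = [C' i. i \<leftarrow> [0..<m], r ! i]"
  proof -
    fix m r show "m \<le> n \<Longrightarrow> [C i. i \<leftarrow> [0..<m], r ! i] = [C' i. i \<leftarrow> [0..<m], r ! i]"
      by (induction m) (auto simp: C'_def)
  qed
  have rm: "\<And>r. row_mul n r C = rowm n C' n r"
    unfolding row_mul_def rowm_def using lists by simp
  have rlen: "\<And>r. length (row_mul n r C) = n" using rm rowm_len[OF lenC'] by simp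
  have sh: "\<And>r. r \<in> bits n \<Longrightarrow> shifted n (row_mul n r C) (U * Zd n r * V)"
  proof -
    fix r assume r: "r \<in> bits n"
    have "shifted n (rowm n C' n r) (U * Zd n (zm n n r) * V)"
      by (rule conj_shifted[OF U V VU UV lenC' tab']) simp
    then show "shifted n (row_mul n r C) (U * Zd n r * V)" using r by (simp add: rm zm_n bits_def)
  qed
  have lin: "\<And>r s. r \<in> bits n \<Longrightarrow> s \<in> bits n \<Longrightarrow> row_mul n (bxor r s) C = bxor (row_mul n r C) (row_mul n s C)"
    using rowm_lin[OF lenC'] by (simp add: rm bits_def)
  from assms(3) have zb: "z \<in> bits n" and zU: "U $$ (bits_to_nat z, 0) \<noteq> 0" by (auto simp: supp0_def)
  define zi where "zi = bits_to_nat z"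
  have zlen: "length z = n" using zb by (simp add: bits_def)
  have zi: "zi < 2^n" using bits_to_nat_lt[of z] zlen by (simp add: zi_def)
  have zin: "nat_to_bits n zi = z" using nat_to_bits_eq_iff[OF zi zb] by (simp add: zi_def)
  have zU': "U $$ (zi, 0) \<noteq> 0" using zU by (simp add: zi_def)
  define f where "f r = bxor (row_mul n r C) z" for r

  have P1: "\<And>r. r \<in> bits n \<Longrightarrow> f r \<in> supp0 n U"
  proof -
    fix r assume r: "r \<in> bits n"
    define M where "M = U * Zd n r * V"
    define a where "a = row_mul n r C"
    have alen: "length a = n" by (simp add: a_def rlen)
    have Mc: "M \<in> carrier_mat (2^n) (2^n)" unfolding M_def
      by (rule mult_carrier_mat[OF mult_carrier_mat[OF U Zd_carrier] V])
    have "M * U = (U * Zd n r) * (V * U)" unfolding M_def by (rule assoc_mult_mat) (use U V in auto)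
    then have MU: "M * U = U * Zd n r" using VU U by simp
    have pos: "0 < (2::nat)^n" by simp
    have "(M * U) $$ (zi, 0) = U $$ (zi, 0)"
      unfolding MU using Zd_mult_right[OF U zi pos, of r] by (simp add: dz_def nat_to_bits_0)
    moreover have "(M * U) $$ (zi, 0) = (\<Sum>l\<in>{0..<2^n}. M $$ (zi,l) * U $$ (l,0))"
      using Mc U zi by (simp add: scalar_prod_def)
    ultimately have "(\<Sum>l\<in>{0..<2^n}. M $$ (zi,l) * U $$ (l,0)) \<noteq> 0" using zU' by simp
    then obtain l where l: "l < 2^n" and nz: "M $$ (zi,l) * U $$ (l,0) \<noteq> 0"
      by (metis (no_types, lifting) atLeastLessThan_iff sum.neutral)
    then have "M $$ (zi,l) \<noteq> 0" "U $$ (l,0) \<noteq> 0" by auto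
    with sh[OF r] l zi have "z = bxor (nat_to_bits n l) a"
      by (auto simp: shifted_def M_def a_def zin)
    then have "nat_to_bits n l = bxor z a" using bxor_eq_iff[of z n "nat_to_bits n l" a] zlen alen by simp
    also have "\<dots> = f r" using zlen alen by (simp add: f_def a_def bxor_comm)
    finally have "l = bits_to_nat (f r)" using nat_to_bits_eq_iff[OF l, of "f r"] zlen alen
      by (simp add: bits_def f_def a_def)
    then show "f r \<in> supp0 n U" using \<open>U $$ (l,0) \<noteq> 0\<close> zlen alen
      by (simp add: supp0_def bits_def f_def a_def)
  qed

  have P2: "\<And>y. y \<in> supp0 n U \<Longrightarrow> \<exists>r\<in>bits n. y = f r"
  proof -
    fix y assume y: "y \<in> supp0 n U"
    then have yb: "y \<in> bits n" and yU: "U $$ (bits_to_nat y, 0) \<noteq> 0" by (auto simp: supp0_def)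
    define yi where "yi = bits_to_nat y"
    have ylen: "length y = n" using yb by (simp add: bits_def)
    have yi: "yi < 2^n" using bits_to_nat_lt[of y] ylen by (simp add: yi_def)
    have yin: "nat_to_bits n yi = y" using nat_to_bits_eq_iff[OF yi yb] by (simp add: yi_def)
    have "(\<Sum>r\<in>bits n. (U * Zd n r * V) $$ (yi,zi)) = 2^n * U $$ (yi,0) * V $$ (0,zi)"
      by (rule conj_sum[OF U V yi zi])
    also have "\<dots> \<noteq> 0" using Vidx[of 0 zi] zi yU zU' by (simp add: yi_def)
    finally obtain r where r: "r \<in> bits n" and nz: "(U * Zd n r * V) $$ (yi,zi) \<noteq> 0"
      by (metis (no_types, lifting) sum.neutral)
    with sh[OF r] yi zi have "y = bxor z (row_mul n r C)"
      by (auto simp: shifted_def yin zin)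
    also have "\<dots> = f r" using zlen rlen[of r] by (simp add: f_def bxor_comm)
    finally show "\<exists>r\<in>bits n. y = f r" using r by blast
  qed

  have S: "supp0 n U = f ` bits n" using P1 P2 by blast

  define K where "K = {k \<in> bits n. row_mul n k C = replicate n False}"
  have fib: "\<And>r0. r0 \<in> bits n \<Longrightarrow> {r \<in> bits n. f r = f r0} = (\<lambda>k. bxor k r0) ` K"
  proof -
    fix r0 assume r0: "r0 \<in> bits n"
    have feq: "\<And>r. f r = f r0 \<longleftrightarrow> row_mul n r C = row_mul n r0 C"
    proof -
      fix r
      have "f r = f r0 \<Longrightarrow> row_mul n r C = row_mul n r0 C"
      proof -
        assume "f r = f r0"
        then have "bxor (f r) z = bxor (f r0) z" by simp
        then show ?thesis using zlen rlen[of r] rlen[of r0] by (simp add: f_def bxor_cancel)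
      qed
      then show "f r = f r0 \<longleftrightarrow> row_mul n r C = row_mul n r0 C" by (auto simp: f_def)
    qed
    show "{r \<in> bits n. f r = f r0} = (\<lambda>k. bxor k r0) ` K"
    proof
      show "{r \<in> bits n. f r = f r0} \<subseteq> (\<lambda>k. bxor k r0) ` K"
      proof
        fix r assume "r \<in> {r \<in> bits n. f r = f r0}"
        then have r: "r \<in> bits n" and e: "row_mul n r C = row_mul n r0 C" using feq by auto
        have kb: "bxor r r0 \<in> bits n" using r r0 by (simp add: bits_def)
        have "row_mul n (bxor r r0) C = replicate n False"
          using lin[OF r r0] e rlen[of r0] by simp
        then have "bxor r r0 \<in> K" using kb by (simp add: K_def)
        moreover have "r = bxor (bxor r r0) r0" using r r0 by (simp add: bits_def bxor_cancel)
        ultimately show "r \<in> (\<lambda>k. bxor k r0) ` K" by blast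
      qed
    next
      show "(\<lambda>k. bxor k r0) ` K \<subseteq> {r \<in> bits n. f r = f r0}"
      proof
        fix r assume "r \<in> (\<lambda>k. bxor k r0) ` K"
        then obtain k where k: "k \<in> bits n" "row_mul n k C = replicate n False" and rk: "r = bxor k r0"
          by (auto simp: K_def)
        have rb: "r \<in> bits n" using k r0 rk by (simp add: bits_def)
        have "row_mul n r C = row_mul n r0 C" using lin[OF k(1) r0] k(2) rk rlen[of r0] by simp
        then show "r \<in> {r \<in> bits n. f r = f r0}" using rb feq by simp
      qed
    qed
  qed
  have injK: "\<And>r0. r0 \<in> bits n \<Longrightarrow> inj_on (\<lambda>k. bxor k r0) K"
  proof (rule inj_onI)
    fix r0 x y assume r0: "r0 \<in> bits n" and x: "x \<in> K" and y: "y \<in> K" and e: "bxor x r0 = bxor y r0"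
    have l: "length x = n" "length y = n" "length r0 = n" using r0 x y by (auto simp: K_def bits_def)
    have "bxor (bxor x r0) r0 = bxor (bxor y r0) r0" using e by simp
    then show "x = y" using l by (simp add: bxor_cancel)
  qed
  have cfib: "\<And>r0. r0 \<in> bits n \<Longrightarrow> card {r \<in> bits n. f r = f r0} = card K"
    using fib injK by (simp add: card_image)
  have "card (bits n) = (\<Sum>y\<in>f ` bits n. card {r \<in> bits n. f r = y})"
    using sum.image_gen[OF finite_bits[of n], of "\<lambda>_. (1::nat)" f] by simp
  also have "\<dots> = (\<Sum>y\<in>f ` bits n. card K)"
    by (rule sum.cong) (auto simp: cfib)
  finally have cardeq: "card (f ` bits n) * card K = 2^n" by simp
  have fin_img: "finite (f ` bits n)" by simp
  have ne_img: "f ` bits n \<noteq> {}" by simp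

  have P3: "map_pmf f (pmf_of_set (bits n)) = pmf_of_set (supp0 n U)"
  proof (rule pmf_eqI)
    fix y
    have "pmf (map_pmf f (pmf_of_set (bits n))) y = card (bits n \<inter> f -` {y}) / card (bits n)"
      by (simp add: pmf_map measure_pmf_of_set)
    also have "\<dots> = pmf (pmf_of_set (supp0 n U)) y"
    proof (cases "y \<in> f ` bits n")
      case True
      then obtain r0 where r0: "r0 \<in> bits n" and y: "y = f r0" by auto
      have "bits n \<inter> f -` {y} = {r \<in> bits n. f r = f r0}" using y by auto
      then have "card (bits n \<inter> f -` {y}) = card K" using cfib[OF r0] by simp
      moreover have "real (card (f ` bits n)) * real (card K) = 2^n"
        using cardeq by (metis of_nat_mult of_nat_numeral of_nat_power)
      moreover have "card (f ` bits n) > 0" using fin_img ne_img by (simp add: card_gt_0_iff)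
      ultimately show ?thesis using True S fin_img ne_img
        by (simp add: field_simps)
    next
      case False
      then have "bits n \<inter> f -` {y} = {}" by auto
      then show ?thesis using False S fin_img ne_img by simp
    qed
    finally show "pmf (map_pmf f (pmf_of_set (bits n))) y = pmf (pmf_of_set (supp0 n U)) y" .
  qed
  have fe: "f = (\<lambda>r. bxor (row_mul n r C) z)" by (rule ext) (simp add: f_def)
  show ?thesis using P1 P3 unfolding fe by simp
qed

end
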